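(* Let $\mathcal{A}\in\mathbb{R}^{n\times n\times n}$ and $\mathcal{E}\in\mathbb{R}^{n\times n\times n}$ be such that $\mathcal{A}$ and $\tilde{\mathcal{A}}=\mathcal{A}+\mathcal{E}$ are piezoelectric-type tensors. Then $$\sqrt{(\lambda_{C\max}(\mathcal{A}))^2+\lambda_{Z\min}(\mathcal{S}_{\tilde{\mathcal{A}}}-\mathcal{S}_{\mathcal{A}})}\ \le\ \lambda_{C\max}(\tilde{\mathcal{A}})\ \le\ \sqrt{(\lambda_{C\max}(\mathcal{A}))^2+\lambda_{Z\max}(\mathcal{S}_{\tilde{\mathcal{A}}}-\mathcal{S}_{\mathcal{A}})}.$$ (In particular both quantities under the square roots are nonnegative.)
   Context: A tensor $\mathcal{A}=(a_{ijk})\in\mathbb{R}^{n\times n\times n}$ is piezoelectric-type if $a_{ijk}=a_{ikj}$ for all $i,j,k$. For such $\mathcal{A}$, $\lambda_{C\max}(\mathcal{A})=\max\{\sum_{i,j,k}a_{ijk}x_iy_jy_k:\ \mathbf{x},\mathbf{y}\in\mathbb{R}^n,\ \mathbf{x}^T\mathbf{x}=\mathbf{y}^T\mathbf{y}=1\}$ is its largest $C$-eigenvalue (a $C$-eigenvalue being a real $\lambda$ with unit $\mathbf{x},\mathbf{y}$ satisfying $\sum_{j,k}a_{ijk}y_jy_k=\lambda x_i$ and $\sum_{j,k}a_{jki}x_jy_k=\lambda y_i$ for all $i$). The symmetric fourth-order tensor $\mathcal{S}_{\mathcal{A}}=(\bar b_{i_1i_2i_3i_4})$ is defined by $\bar b_{i_1i_2i_3i_4}=\frac13(b_{i_1i_2i_3i_4}+b_{i_1i_3i_2i_4}+b_{i_1i_4i_2i_3})$,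 where $b_{i_1i_2i_3i_4}=\sum_{i=1}^n a_{ii_1i_2}a_{ii_3i_4}$. For a symmetric fourth-order tensor $\mathcal{T}=(t_{i_1i_2i_3i_4})$, a $Z$-eigenvalue is a real $\lambda$ with some $\mathbf{x}\in\mathbb{R}^n$, $\mathbf{x}^T\mathbf{x}=1$, such that $\sum_{i_2,i_3,i_4}t_{ii_2i_3i_4}x_{i_2}x_{i_3}x_{i_4}=\lambda x_i$ for all $i$; $\lambda_{Z\max}(\mathcal{T})$ and $\lambda_{Z\min}(\mathcal{T})$ denote the largest and smallest $Z$-eigenvalues, which equal respectively the maximum and minimum of $\mathcal{T}\mathbf{x}^4=\sum t_{i_1i_2i_3i_4}x_{i_1}x_{i_2}x_{i_3}x_{i_4}$ over unit vectors $\mathbf{x}\in\mathbb{R}^n$. *)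

theory Defs
  imports "HOL-Analysis.Analysis"
begin

type_synonym 'n tensor3 = "'n \<Rightarrow> 'n \<Rightarrow> 'n \<Rightarrow> real"
type_synonym 'n tensor4 = "'n \<Rightarrow> 'n \<Rightarrow> 'n \<Rightarrow> 'n \<Rightarrow> real"

definition piezo_type :: "('n::finite) tensor3 \<Rightarrow> bool" where
  "piezo_type A \<longleftrightarrow> (\<forall>i j k. A i j k = A i k j)"

definition tadd3 :: "('n::finite) tensor3 \<Rightarrow> 'n tensor3 \<Rightarrow> 'n tensor3" where
  "tadd3 A E = (\<lambda>i j k. A i j k + E i j k)"

definition tsub4 :: "('n::finite) tensor4 \<Rightarrow> 'n tensor4 \<Rightarrow> 'n tensor4" where
  "tsub4 S T = (\<lambda>i1 i2 i3 i4. S i1 i2 i3 i4 - T i1 i2 i3 i4)"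

definition form3 :: "('n::finite) tensor3 \<Rightarrow> real^'n \<Rightarrow> real^'n \<Rightarrow> real" where
  "form3 A x y = (\<Sum>i\<in>UNIV. \<Sum>j\<in>UNIV. \<Sum>k\<in>UNIV. A i j k * x$i * y$j * y$k)"

text \<open>Largest C-eigenvalue, defined (as in the paper) as the maximum of A x y y over unit x, y.\<close>
definition lambda_Cmax :: "('n::finite) tensor3 \<Rightarrow> real" where
  "lambda_Cmax A = (GREATEST v. \<exists>x y. x \<bullet> x = 1 \<and> y \<bullet> y = 1 \<and> v = form3 A x y)"

definition Btensor :: "('n::finite) tensor3 \<Rightarrow> 'n tensor4" where
  "Btensor A = (\<lambda>i1 i2 i3 i4. \<Sum>i\<in>UNIV. A i i1 i2 * A i i3 i4)"

definition S_tensor :: "('n::finite) tensor3 \<Rightarrow> 'n tensor4" where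
  "S_tensor A = (\<lambda>i1 i2 i3 i4.
      (Btensor A i1 i2 i3 i4 + Btensor A i1 i3 i2 i4 + Btensor A i1 i4 i2 i3) / 3)"

definition is_Z_eigenvalue :: "('n::finite) tensor4 \<Rightarrow> real \<Rightarrow> bool" where
  "is_Z_eigenvalue T lam \<longleftrightarrow> (\<exists>x::real^'n. x \<bullet> x = 1 \<and>
     (\<forall>i. (\<Sum>i2\<in>UNIV. \<Sum>i3\<in>UNIV. \<Sum>i4\<in>UNIV. T i i2 i3 i4 * x$i2 * x$i3 * x$i4) = lam * x$i))"

definition lambda_Zmax :: "('n::finite) tensor4 \<Rightarrow> real" where
  "lambda_Zmax T = (GREATEST lam. is_Z_eigenvalue T lam)"

definition lambda_Zmin :: "('n::finite) tensor4 \<Rightarrow> real" where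
  "lambda_Zmin T = (LEAST lam. is_Z_eigenvalue T lam)"

end

theory Submission
  imports Defs
begin

definition P4 :: "('n::finite) tensor4 \<Rightarrow> real^'n \<Rightarrow> real" where
  "P4 T x = (\<Sum>a\<in>UNIV. \<Sum>b\<in>UNIV. \<Sum>c\<in>UNIV. \<Sum>d\<in>UNIV. T a b c d * x$a * x$b * x$c * x$d)"

definition Tx3 :: "('n::finite) tensor4 \<Rightarrow> real^'n \<Rightarrow> 'n \<Rightarrow> real" where
  "Tx3 T x i = (\<Sum>b\<in>UNIV. \<Sum>c\<in>UNIV. \<Sum>d\<in>UNIV. T i b c d * x$b * x$c * x$d)"

definition sym4 :: "('n::finite) tensor4 \<Rightarrow> bool" where
  "sym4 T \<longleftrightarrow> (\<forall>a b c d. T a b c d = T b a c d \<and> T a b c d = T c b a d \<and> T a b c d = T d b c a)"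

lemma P4_Tx3: "P4 T x = (\<Sum>i\<in>UNIV. x$i * Tx3 T x i)"
  unfolding P4_def Tx3_def by (simp add: sum_distrib_left mult.assoc mult.left_commute)

lemma Z_val: assumes "is_Z_eigenvalue T lam" shows "\<exists>x::real^'n::finite. x \<bullet> x = 1 \<and> lam = P4 T x"
proof -
  obtain x :: "real^'n" where x: "x \<bullet> x = 1" and e: "\<And>i. Tx3 T x i = lam * x$i"
    using assms unfolding is_Z_eigenvalue_def Tx3_def by blast
  have "lam = lam * (x \<bullet> x)" using x by simp
  also have "\<dots> = (\<Sum>i\<in>UNIV. x$i * Tx3 T x i)" by (simp add: e inner_vec_def sum_distrib_left mult_ac)
  finally show ?thesis using x P4_Tx3 by metis
qed

lemma P4_scale: "P4 T (c *\<^sub>R x) = c^4 * P4 T x"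
  unfolding P4_def by (simp add: sum_distrib_left power4_eq_xxxx mult_ac)

lemma continuous_P4: "continuous_on S (P4 T)"
  unfolding P4_def by (intro continuous_intros)

lemma deriv_h:
  fixes x e :: "real^'n::finite"
  shows "((\<lambda>t. (\<Sum>a\<in>UNIV. \<Sum>b\<in>UNIV. \<Sum>c\<in>UNIV. \<Sum>d\<in>UNIV. T a b c d * (x$a + t*e$a) * (x$b + t*e$b) * (x$c + t*e$c) * (x$d + t*e$d))
     - M * (\<Sum>a\<in>UNIV. (x$a + t*e$a) * (x$a + t*e$a))^2) has_real_derivative
     (\<Sum>a\<in>UNIV. \<Sum>b\<in>UNIV. \<Sum>c\<in>UNIV. \<Sum>d\<in>UNIV. T a b c d * (e$a * x$b * x$c * x$d + x$a * e$b * x$c * x$d + x$a * x$b * e$c * x$d + x$a * x$b * x$c * e$d))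
     - M * (2 * (\<Sum>a\<in>UNIV. x$a * x$a) * (\<Sum>a\<in>UNIV. 2 * e$a * x$a))) (at 0)"
  apply (rule derivative_eq_intros refl)+
  apply (simp add: algebra_simps)
  done
lemma sum_axis: "(\<Sum>b\<in>UNIV. f b * (axis i (1::real))$b) = f i"
proof -
  have "(\<Sum>b\<in>UNIV. f b * (axis i (1::real))$b) = (\<Sum>b\<in>UNIV. if b = i then f b else 0)"
    by (rule sum.cong) (auto simp: axis_def)
  then show ?thesis by simp
qed

lemma t1: "(\<Sum>a\<in>UNIV. \<Sum>b\<in>UNIV. \<Sum>c\<in>UNIV. \<Sum>d\<in>UNIV. T a b c d * ((axis i 1)$a * x$b * x$c * x$d)) = Tx3 T x i"
proof -
  have "(\<Sum>a\<in>UNIV. \<Sum>b\<in>UNIV. \<Sum>c\<in>UNIV. \<Sum>d\<in>UNIV. T a b c d * ((axis i 1)$a * x$b * x$c * x$d))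
     = (\<Sum>a\<in>UNIV. (\<Sum>b\<in>UNIV. \<Sum>c\<in>UNIV. \<Sum>d\<in>UNIV. T a b c d * x$b * x$c * x$d) * (axis i 1)$a)"
    by (simp add: sum_distrib_right sum_distrib_left mult_ac)
  also have "\<dots> = Tx3 T x i" by (subst sum_axis) (simp add: Tx3_def)
  finally show ?thesis .
qed

lemma t2: assumes "sym4 T" shows "(\<Sum>a\<in>UNIV. \<Sum>b\<in>UNIV. \<Sum>c\<in>UNIV. \<Sum>d\<in>UNIV. T a b c d * (x$a * (axis i 1)$b * x$c * x$d)) = Tx3 T x i"
proof -
  have "(\<Sum>a\<in>UNIV. \<Sum>b\<in>UNIV. \<Sum>c\<in>UNIV. \<Sum>d\<in>UNIV. T a b c d * (x$a * (axis i 1)$b * x$c * x$d))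
     = (\<Sum>b\<in>UNIV. (\<Sum>a\<in>UNIV. \<Sum>c\<in>UNIV. \<Sum>d\<in>UNIV. T a b c d * x$a * x$c * x$d) * (axis i 1)$b)"
    by (subst sum.swap) (simp add: sum_distrib_right sum_distrib_left mult_ac) 
  also have "\<dots> = Tx3 T x i" unfolding sum_axis Tx3_def
    apply (intro sum.cong refl)
    subgoal for a c d using assms unfolding sym4_def by (metis (no_types)) 
    done
  finally show ?thesis .
qed

lemma t3: assumes "sym4 T" shows "(\<Sum>a\<in>UNIV. \<Sum>b\<in>UNIV. \<Sum>c\<in>UNIV. \<Sum>d\<in>UNIV. T a b c d * (x$a * x$b * (axis i 1)$c * x$d)) = Tx3 T x i"
proof -
  have "(\<Sum>a\<in>UNIV. \<Sum>b\<in>UNIV. \<Sum>c\<in>UNIV. \<Sum>d\<in>UNIV. T a b c d * (x$a * x$b * (axis i 1)$c * x$d))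
     = (\<Sum>a\<in>UNIV. \<Sum>c\<in>UNIV. \<Sum>b\<in>UNIV. \<Sum>d\<in>UNIV. T a b c d * (x$a * x$b * (axis i 1)$c * x$d))"
    by (rule sum.cong[OF refl], rule sum.swap)
  also have "\<dots> = (\<Sum>c\<in>UNIV. \<Sum>a\<in>UNIV. \<Sum>b\<in>UNIV. \<Sum>d\<in>UNIV. T a b c d * (x$a * x$b * (axis i 1)$c * x$d))"
    by (rule sum.swap)
  also have "\<dots> = (\<Sum>c\<in>UNIV. (\<Sum>a\<in>UNIV. \<Sum>b\<in>UNIV. \<Sum>d\<in>UNIV. T a b c d * x$a * x$b * x$d) * (axis i 1)$c)"
    by (simp add: sum_distrib_right sum_distrib_left mult_ac)
  also have "\<dots> = (\<Sum>a\<in>UNIV. \<Sum>b\<in>UNIV. \<Sum>d\<in>UNIV. T i b a d * x$b * x$a * x$d)"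
    unfolding sum_axis apply (intro sum.cong refl)
    subgoal for a b d using assms unfolding sym4_def by (simp add: mult_ac) (metis (no_types)) 
    done
  also have "\<dots> = Tx3 T x i" unfolding Tx3_def by (rule sum.swap)
  finally show ?thesis .
qed

lemma t4: assumes "sym4 T" shows "(\<Sum>a\<in>UNIV. \<Sum>b\<in>UNIV. \<Sum>c\<in>UNIV. \<Sum>d\<in>UNIV. T a b c d * (x$a * x$b * x$c * (axis i 1)$d)) = Tx3 T x i"
proof -
  have "(\<Sum>a\<in>UNIV. \<Sum>b\<in>UNIV. \<Sum>c\<in>UNIV. \<Sum>d\<in>UNIV. T a b c d * (x$a * x$b * x$c * (axis i 1)$d))
     = (\<Sum>a\<in>UNIV. \<Sum>b\<in>UNIV. \<Sum>d\<in>UNIV. \<Sum>c\<in>UNIV. T a b c d * (x$a * x$b * x$c * (axis i 1)$d))"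
    by (intro sum.cong[OF refl] sum.swap)
  also have "\<dots> = (\<Sum>a\<in>UNIV. \<Sum>d\<in>UNIV. \<Sum>b\<in>UNIV. \<Sum>c\<in>UNIV. T a b c d * (x$a * x$b * x$c * (axis i 1)$d))"
    by (intro sum.cong[OF refl] sum.swap)
  also have "\<dots> = (\<Sum>d\<in>UNIV. \<Sum>a\<in>UNIV. \<Sum>b\<in>UNIV. \<Sum>c\<in>UNIV. T a b c d * (x$a * x$b * x$c * (axis i 1)$d))"
    by (rule sum.swap)
  also have "\<dots> = (\<Sum>d\<in>UNIV. (\<Sum>a\<in>UNIV. \<Sum>b\<in>UNIV. \<Sum>c\<in>UNIV. T a b c d * x$a * x$b * x$c) * (axis i 1)$d)"
    by (simp add: sum_distrib_right sum_distrib_left mult_ac)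
  also have "\<dots> = (\<Sum>a\<in>UNIV. \<Sum>b\<in>UNIV. \<Sum>c\<in>UNIV. T i b c a * x$b * x$c * x$a)"
    unfolding sum_axis apply (intro sum.cong refl)
    subgoal for a b c using assms unfolding sym4_def by (simp add: mult_ac) (metis (no_types)) 
    done
  also have "\<dots> = (\<Sum>b\<in>UNIV. \<Sum>a\<in>UNIV. \<Sum>c\<in>UNIV. T i b c a * x$b * x$c * x$a)"
    by (rule sum.swap)
  also have "\<dots> = Tx3 T x i" unfolding Tx3_def by (intro sum.cong[OF refl] sum.swap)
  finally show ?thesis .
qed
lemma P4_zero: "P4 T 0 = 0" unfolding P4_def by simp

lemma g_le:
  fixes x :: "real^'n::finite"
  assumes max: "\<forall>y::real^'n. y \<bullet> y = 1 \<longrightarrow> P4 T y \<le> M"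
  shows "P4 T y - M * (y \<bullet> y)^2 \<le> 0"
proof (cases "y = 0")
  case True then show ?thesis by (simp add: P4_zero)
next
  case False
  define r where "r = norm y"
  define u where "u = (1/r) *\<^sub>R y"
  have r: "r > 0" using False r_def by simp
  have yu: "y = r *\<^sub>R u" using r u_def by simp
  have "norm u = 1" using r u_def r_def by simp
  then have uu: "u \<bullet> u = 1" by (simp add: dot_square_norm)
  have "P4 T y = r^4 * P4 T u" using yu P4_scale by metis
  also have "\<dots> \<le> r^4 * M" using max uu r by simp
  finally have "P4 T y \<le> r^4 * M" .
  moreover have "(y \<bullet> y)^2 = r^4" using r_def by (simp add: dot_square_norm flip: power_mult)
  ultimately show ?thesis by (simp add: algebra_simps)
qed

lemma Z_crit:
  fixes x :: "real^'n::finite"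
  assumes sym: "sym4 T" and x: "x \<bullet> x = 1" and max: "\<forall>y::real^'n. y \<bullet> y = 1 \<longrightarrow> P4 T y \<le> P4 T x"
  shows "is_Z_eigenvalue T (P4 T x)"
proof -
  define M where "M = P4 T x"
  have "Tx3 T x i = M * x$i" for i
  proof -
    define e :: "real^'n" where "e = axis i 1"
    define h where "h = (\<lambda>t. (\<Sum>a\<in>UNIV. \<Sum>b\<in>UNIV. \<Sum>c\<in>UNIV. \<Sum>d\<in>UNIV. T a b c d * (x$a + t*e$a) * (x$b + t*e$b) * (x$c + t*e$c) * (x$d + t*e$d))
     - M * (\<Sum>a\<in>UNIV. (x$a + t*e$a) * (x$a + t*e$a))^2)"
    have hg: "h t = P4 T (x + t *\<^sub>R e) - M * ((x + t *\<^sub>R e) \<bullet> (x + t *\<^sub>R e))^2" for t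
      unfolding h_def P4_def inner_vec_def by simp
    have hle: "h t \<le> h 0" for t
    proof -
      have "h t \<le> 0" unfolding hg using g_le[of T M] max M_def by blast
      moreover have "h 0 = 0" unfolding hg using x M_def by simp
      ultimately show ?thesis by simp
    qed
    have D: "(h has_real_derivative
     (\<Sum>a\<in>UNIV. \<Sum>b\<in>UNIV. \<Sum>c\<in>UNIV. \<Sum>d\<in>UNIV. T a b c d * (e$a * x$b * x$c * x$d + x$a * e$b * x$c * x$d + x$a * x$b * e$c * x$d + x$a * x$b * x$c * e$d))
     - M * (2 * (\<Sum>a\<in>UNIV. x$a * x$a) * (\<Sum>a\<in>UNIV. 2 * e$a * x$a))) (at 0)"
      unfolding h_def by (rule deriv_h)
    have D0: "(\<Sum>a\<in>UNIV. \<Sum>b\<in>UNIV. \<Sum>c\<in>UNIV. \<Sum>d\<in>UNIV. T a b c d * (e$a * x$b * x$c * x$d + x$a * e$b * x$c * x$d + x$a * x$b * e$c * x$d + x$a * x$b * x$c * e$d))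
     - M * (2 * (\<Sum>a\<in>UNIV. x$a * x$a) * (\<Sum>a\<in>UNIV. 2 * e$a * x$a)) = 0"
      by (rule DERIV_local_max[OF D, of 1]) (use hle in auto)
    have s1: "(\<Sum>a\<in>UNIV. \<Sum>b\<in>UNIV. \<Sum>c\<in>UNIV. \<Sum>d\<in>UNIV. T a b c d * (e$a * x$b * x$c * x$d + x$a * e$b * x$c * x$d + x$a * x$b * e$c * x$d + x$a * x$b * x$c * e$d))
       = 4 * Tx3 T x i"
      using t1[of T i x] t2[OF sym, of x i] t3[OF sym, of x i] t4[OF sym, of x i]
      unfolding e_def by (simp add: distrib_left sum.distrib)
    have s2: "(\<Sum>a\<in>UNIV. x$a * x$a) = 1" using x by (simp add: inner_vec_def)
    have s3: "(\<Sum>a\<in>UNIV. 2 * e$a * x$a) = 2 * x$i"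
      using sum_axis[of "\<lambda>a. 2 * x$a" i] unfolding e_def by (simp add: mult_ac)
    show ?thesis using D0 s1 s2 s3 by simp
  qed
  then show ?thesis unfolding is_Z_eigenvalue_def Tx3_def M_def using x by blast
qed
lemma sphere_eq: "{y::real^'n::finite. y \<bullet> y = 1} = sphere 0 1"
  by (auto simp: dot_square_norm norm_eq_1)

lemma sphere_ne: "sphere (0::real^'n::finite) 1 \<noteq> {}"
proof -
  have "axis undefined (1::real) \<in> sphere (0::real^'n) 1" by simp
  then show ?thesis by blast
qed

lemma exists_max:
  fixes f :: "real^'n::finite \<Rightarrow> real"
  assumes "continuous_on UNIV f"
  shows "\<exists>x. x \<bullet> x = 1 \<and> (\<forall>y. y \<bullet> y = 1 \<longrightarrow> f y \<le> f x)"
proof -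
  obtain x where "x \<in> sphere 0 1" "\<forall>y\<in>sphere 0 1. f y \<le> f x"
    using continuous_attains_sup[OF compact_sphere sphere_ne continuous_on_subset[OF assms]] by blast
  then show ?thesis using sphere_eq by blast
qed

lemma exists_min:
  fixes f :: "real^'n::finite \<Rightarrow> real"
  assumes "continuous_on UNIV f"
  shows "\<exists>x. x \<bullet> x = 1 \<and> (\<forall>y. y \<bullet> y = 1 \<longrightarrow> f x \<le> f y)"
proof -
  obtain x where "x \<in> sphere 0 1" "\<forall>y\<in>sphere 0 1. f x \<le> f y"
    using continuous_attains_inf[OF compact_sphere sphere_ne continuous_on_subset[OF assms]] by blast
  then show ?thesis using sphere_eq by blast
qed

lemma Zmax_ge:
  fixes T :: "('n::finite) tensor4"
  assumes sym: "sym4 T" and y: "y \<bullet> y = 1"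
  shows "P4 T y \<le> lambda_Zmax T"
proof -
  obtain x :: "real^'n" where x: "x \<bullet> x = 1" and mx: "\<forall>y. y \<bullet> y = 1 \<longrightarrow> P4 T y \<le> P4 T x"
    using exists_max[OF continuous_P4] by blast
  have "lambda_Zmax T = P4 T x"
    unfolding lambda_Zmax_def
  proof (rule Greatest_equality)
    show "is_Z_eigenvalue T (P4 T x)" by (rule Z_crit[OF sym x mx])
    fix v assume "is_Z_eigenvalue T v"
    then obtain z :: "real^'n" where "z \<bullet> z = 1" "v = P4 T z" using Z_val by blast
    then show "v \<le> P4 T x" using mx by simp
  qed
  then show ?thesis using mx y by simp
qed

lemma P4_neg: "P4 (\<lambda>a b c d. - T a b c d) y = - P4 T y"
  unfolding P4_def by (simp add: sum_negf)

lemma Z_neg: "is_Z_eigenvalue (\<lambda>a b c d. - T a b c d) (- v) \<Longrightarrow> is_Z_eigenvalue T v"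
  unfolding is_Z_eigenvalue_def by (simp add: sum_negf)

lemma Zmin_le:
  fixes T :: "('n::finite) tensor4"
  assumes sym: "sym4 T" and y: "y \<bullet> y = 1"
  shows "lambda_Zmin T \<le> P4 T y"
proof -
  obtain x :: "real^'n" where x: "x \<bullet> x = 1" and mx: "\<forall>y. y \<bullet> y = 1 \<longrightarrow> P4 T x \<le> P4 T y"
    using exists_min[OF continuous_P4] by blast
  have sym': "sym4 (\<lambda>a b c d. - T a b c d)" using sym unfolding sym4_def by metis
  have mx': "\<forall>y::real^'n. y \<bullet> y = 1 \<longrightarrow> P4 (\<lambda>a b c d. - T a b c d) y \<le> P4 (\<lambda>a b c d. - T a b c d) x"
    using mx by (simp add: P4_neg)
  have "lambda_Zmin T = P4 T x"
    unfolding lambda_Zmin_def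
  proof (rule Least_equality)
    show "is_Z_eigenvalue T (P4 T x)" using Z_crit[OF sym' x mx'] Z_neg by (simp add: P4_neg)
    fix v assume "is_Z_eigenvalue T v"
    then obtain z :: "real^'n" where "z \<bullet> z = 1" "v = P4 T z" using Z_val by blast
    then show "P4 T x \<le> v" using mx by simp
  qed
  then show ?thesis using mx y by simp
qed

lemma Zmin_val:
  fixes T :: "('n::finite) tensor4"
  assumes sym: "sym4 T"
  shows "\<exists>z::real^'n. z \<bullet> z = 1 \<and> lambda_Zmin T = P4 T z"
proof -
  obtain x :: "real^'n" where x: "x \<bullet> x = 1" and mx: "\<forall>y. y \<bullet> y = 1 \<longrightarrow> P4 T x \<le> P4 T y"
    using exists_min[OF continuous_P4] by blast
  have sym': "sym4 (\<lambda>a b c d. - T a b c d)" using sym unfolding sym4_def by metis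
  have mx': "\<forall>y::real^'n. y \<bullet> y = 1 \<longrightarrow> P4 (\<lambda>a b c d. - T a b c d) y \<le> P4 (\<lambda>a b c d. - T a b c d) x"
    using mx by (simp add: P4_neg)
  have "lambda_Zmin T = P4 T x"
    unfolding lambda_Zmin_def
  proof (rule Least_equality)
    show "is_Z_eigenvalue T (P4 T x)" using Z_crit[OF sym' x mx'] Z_neg by (simp add: P4_neg)
    fix v assume "is_Z_eigenvalue T v"
    then obtain z :: "real^'n" where "z \<bullet> z = 1" "v = P4 T z" using Z_val by blast
    then show "P4 T x \<le> v" using mx by simp
  qed
  then show ?thesis using x by blast
qed

lemma Bsym1: "piezo_type A \<Longrightarrow> Btensor A p q r s = Btensor A q p r s"
  unfolding Btensor_def piezo_type_def by metis
lemma Bsym2: "piezo_type A \<Longrightarrow> Btensor A p q r s = Btensor A p q s r"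
  unfolding Btensor_def piezo_type_def by metis
lemma Bswap: "Btensor A p q r s = Btensor A r s p q"
  unfolding Btensor_def by (simp add: mult.commute)

lemma sym_S: assumes p: "piezo_type A" shows "sym4 (S_tensor A)"
  unfolding sym4_def
proof (intro allI conjI)
  fix a b c d
  note B1 = Bsym1[OF p] and B2 = Bsym2[OF p] and B3 = Bswap
  let ?B = "Btensor A"
  have "?B b a c d = ?B a b c d" "?B b c a d = ?B a d b c" "?B b d a c = ?B a c b d"
    by (metis B1 B2 B3)+
  then show "S_tensor A a b c d = S_tensor A b a c d" unfolding S_tensor_def by simp
  have "?B c d b a = ?B a b c d" "?B c a b d = ?B a c b d" "?B c b a d = ?B a d b c"
    by (metis B1 B2 B3)+
  then show "S_tensor A a b c d = S_tensor A c b a d" unfolding S_tensor_def by simp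
  have "?B d a b c = ?B a d b c" "?B d b c a = ?B a c b d" "?B d c b a = ?B a b c d"
    by (metis B1 B2 B3)+
  then show "S_tensor A a b c d = S_tensor A d b c a" unfolding S_tensor_def by simp
qed

lemma sym_sub: "sym4 S \<Longrightarrow> sym4 T \<Longrightarrow> sym4 (tsub4 S T)"
  unfolding sym4_def tsub4_def by metis

lemma P4_sub: "P4 (tsub4 S T) y = P4 S y - P4 T y"
  unfolding P4_def tsub4_def by (simp add: sum_subtractf left_diff_distrib)
definition wv :: "('n::finite) tensor3 \<Rightarrow> real^'n \<Rightarrow> real^'n" where
  "wv A y = (\<chi> i. \<Sum>j\<in>UNIV. \<Sum>k\<in>UNIV. A i j k * y$j * y$k)"

lemma form3_wv: "form3 A x y = x \<bullet> wv A y"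
  unfolding form3_def wv_def inner_vec_def by (simp add: sum_distrib_left mult_ac)

lemma prod4: "(\<Sum>a\<in>A. \<Sum>b\<in>B. F a b) * (\<Sum>c\<in>C. \<Sum>d\<in>D. (G c d::real)) = (\<Sum>a\<in>A. \<Sum>b\<in>B. \<Sum>c\<in>C. \<Sum>d\<in>D. F a b * G c d)"
  apply (simp only: sum_distrib_right)
  apply (simp only: sum_distrib_left)
  done
lemma P4_perm2: "P4 (\<lambda>a b c d. T a c b d) y = P4 T y"
proof -
  have "P4 (\<lambda>a b c d. T a c b d) y = (\<Sum>a\<in>UNIV. \<Sum>b\<in>UNIV. \<Sum>c\<in>UNIV. \<Sum>d\<in>UNIV. T a c b d * y$a * y$b * y$c * y$d)"
    unfolding P4_def ..
  also have "\<dots> = (\<Sum>a\<in>UNIV. \<Sum>c\<in>UNIV. \<Sum>b\<in>UNIV. \<Sum>d\<in>UNIV. T a c b d * y$a * y$b * y$c * y$d)"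
    by (rule sum.cong[OF refl], rule sum.swap)
  also have "\<dots> = P4 T y" unfolding P4_def by (simp add: mult_ac)
  finally show ?thesis .
qed

lemma P4_perm3: "P4 (\<lambda>a b c d. T a d b c) y = P4 T y"
proof -
  have "P4 (\<lambda>a b c d. T a d b c) y = (\<Sum>a\<in>UNIV. \<Sum>b\<in>UNIV. \<Sum>c\<in>UNIV. \<Sum>d\<in>UNIV. T a d b c * y$a * y$b * y$c * y$d)"
    unfolding P4_def ..
  also have "\<dots> = (\<Sum>a\<in>UNIV. \<Sum>b\<in>UNIV. \<Sum>d\<in>UNIV. \<Sum>c\<in>UNIV. T a d b c * y$a * y$b * y$c * y$d)"
    by (intro sum.cong[OF refl] sum.swap)
  also have "\<dots> = (\<Sum>a\<in>UNIV. \<Sum>d\<in>UNIV. \<Sum>b\<in>UNIV. \<Sum>c\<in>UNIV. T a d b c * y$a * y$b * y$c * y$d)"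
    by (intro sum.cong[OF refl] sum.swap)
  also have "\<dots> = P4 T y" unfolding P4_def by (simp add: mult_ac)
  finally show ?thesis .
qed

lemma P4_B: "P4 (Btensor A) y = wv A y \<bullet> wv A y"
proof -
  have "P4 (Btensor A) y = (\<Sum>a\<in>UNIV. \<Sum>b\<in>UNIV. \<Sum>c\<in>UNIV. \<Sum>d\<in>UNIV. \<Sum>i\<in>UNIV. A i a b * A i c d * y$a * y$b * y$c * y$d)"
    unfolding P4_def Btensor_def by (simp add: sum_distrib_right)
  also have "\<dots> = (\<Sum>a\<in>UNIV. \<Sum>b\<in>UNIV. \<Sum>c\<in>UNIV. \<Sum>i\<in>UNIV. \<Sum>d\<in>UNIV. A i a b * A i c d * y$a * y$b * y$c * y$d)"
    by (intro sum.cong[OF refl] sum.swap)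
  also have "\<dots> = (\<Sum>a\<in>UNIV. \<Sum>b\<in>UNIV. \<Sum>i\<in>UNIV. \<Sum>c\<in>UNIV. \<Sum>d\<in>UNIV. A i a b * A i c d * y$a * y$b * y$c * y$d)"
    by (intro sum.cong[OF refl] sum.swap)
  also have "\<dots> = (\<Sum>a\<in>UNIV. \<Sum>i\<in>UNIV. \<Sum>b\<in>UNIV. \<Sum>c\<in>UNIV. \<Sum>d\<in>UNIV. A i a b * A i c d * y$a * y$b * y$c * y$d)"
    by (intro sum.cong[OF refl] sum.swap)
  also have "\<dots> = (\<Sum>i\<in>UNIV. \<Sum>a\<in>UNIV. \<Sum>b\<in>UNIV. \<Sum>c\<in>UNIV. \<Sum>d\<in>UNIV. A i a b * A i c d * y$a * y$b * y$c * y$d)"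
    by (rule sum.swap)
  also have "\<dots> = wv A y \<bullet> wv A y"
    unfolding wv_def inner_vec_def by (simp add: prod4 mult_ac)
  finally show ?thesis .
qed

lemma P4_add: "P4 (\<lambda>a b c d. T1 a b c d + T2 a b c d) y = P4 T1 y + P4 T2 y"
  unfolding P4_def by (simp add: sum.distrib distrib_right)

lemma P4_div: "P4 (\<lambda>a b c d. T a b c d / r) y = P4 T y / r"
  unfolding P4_def by (simp add: sum_divide_distrib)

lemma P4_S: "P4 (S_tensor A) y = wv A y \<bullet> wv A y"
proof -
  have "P4 (S_tensor A) y = (P4 (Btensor A) y + P4 (\<lambda>a b c d. Btensor A a c b d) y + P4 (\<lambda>a b c d. Btensor A a d b c) y) / 3"
    unfolding S_tensor_def by (simp only: P4_div P4_add)
  then show ?thesis by (simp add: P4_perm2[of "Btensor A"] P4_perm3[of "Btensor A"] P4_B)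
qed
lemma P4_S_norm: "P4 (S_tensor A) y = (norm (wv A y))^2"
  by (simp add: P4_S power2_norm_eq_inner)

lemma Cmax_props:
  fixes A :: "('n::finite) tensor3"
  shows "0 \<le> lambda_Cmax A \<and> (\<forall>y::real^'n. y \<bullet> y = 1 \<longrightarrow> P4 (S_tensor A) y \<le> (lambda_Cmax A)^2)
     \<and> (\<exists>y::real^'n. y \<bullet> y = 1 \<and> P4 (S_tensor A) y = (lambda_Cmax A)^2)"
proof -
  obtain y0 :: "real^'n" where y0: "y0 \<bullet> y0 = 1" and my: "\<forall>y. y \<bullet> y = 1 \<longrightarrow> P4 (S_tensor A) y \<le> P4 (S_tensor A) y0"
    using exists_max[OF continuous_P4] by blast
  define m where "m = norm (wv A y0)"
  have m0: "0 \<le> m" unfolding m_def by (rule norm_ge_zero)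
  have bnd: "norm (wv A y) \<le> m" if "y \<bullet> y = 1" for y
  proof -
    have "(norm (wv A y))^2 \<le> m^2" using my that unfolding m_def P4_S_norm by blast
    then show ?thesis by (rule power2_le_imp_le[OF _ m0])
  qed
  have "lambda_Cmax A = m"
    unfolding lambda_Cmax_def
  proof (rule Greatest_equality)
    show "\<exists>x y. x \<bullet> x = 1 \<and> y \<bullet> y = 1 \<and> m = form3 A x y"
    proof (cases "wv A y0 = 0")
      case True
      have ax: "axis undefined (1::real) \<bullet> (axis undefined 1 :: real^'n) = 1" by (simp only: dot_square_norm norm_axis_1 power_one)
      have "form3 A (axis undefined 1) y0 = 0" unfolding form3_wv True by (rule inner_zero_right)
      moreover have "m = 0" unfolding m_def True by (rule norm_zero)
      ultimately show ?thesis using ax y0 by metis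
    next
      case False
      then have mp: "m > 0" unfolding m_def by (rule zero_less_norm_iff[THEN iffD2])
      have ww: "wv A y0 \<bullet> wv A y0 = m * m" unfolding m_def by (simp only: dot_square_norm power2_eq_square)
      define x where "x = (1/m) *\<^sub>R wv A y0"
      have "x \<bullet> x = 1" unfolding x_def using mp ww by simp
      moreover have "m = x \<bullet> wv A y0" unfolding x_def using mp ww by simp
      ultimately show ?thesis using y0 unfolding form3_wv by blast
    qed
  next
    fix v assume "\<exists>x y. x \<bullet> x = 1 \<and> y \<bullet> y = 1 \<and> v = form3 A x y"
    then obtain x y :: "real^'n" where xy: "x \<bullet> x = 1" "y \<bullet> y = 1" "v = x \<bullet> wv A y" unfolding form3_wv by blast
    have nx: "norm x = 1" using xy(1) by (simp add: norm_eq_sqrt_inner)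
    have "v \<le> norm x * norm (wv A y)" unfolding xy(3) by (rule norm_cauchy_schwarz)
    also have "\<dots> \<le> m" using nx bnd[OF xy(2)] by simp
    finally show "v \<le> m" .
  qed
  moreover have "\<forall>y::real^'n. y \<bullet> y = 1 \<longrightarrow> P4 (S_tensor A) y \<le> m^2"
  proof (intro allI impI)
    fix y :: "real^'n" assume "y \<bullet> y = 1"
    then have "norm (wv A y) \<le> m" by (rule bnd)
    then have "(norm (wv A y))^2 \<le> m^2" by (rule power_mono) (rule norm_ge_zero)
    then show "P4 (S_tensor A) y \<le> m^2" unfolding P4_S_norm .
  qed
  moreover have "P4 (S_tensor A) y0 = m^2" unfolding m_def P4_S_norm ..
  ultimately show ?thesis using m0 y0 by blast
qed

theorem theorem2p2:
  fixes A E :: "('n::finite) tensor3"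
  assumes "piezo_type A" and "piezo_type (tadd3 A E)"
  shows "0 \<le> (lambda_Cmax A)\<^sup>2 + lambda_Zmin (tsub4 (S_tensor (tadd3 A E)) (S_tensor A))
    \<and> 0 \<le> (lambda_Cmax A)\<^sup>2 + lambda_Zmax (tsub4 (S_tensor (tadd3 A E)) (S_tensor A))
    \<and> sqrt ((lambda_Cmax A)\<^sup>2 + lambda_Zmin (tsub4 (S_tensor (tadd3 A E)) (S_tensor A)))
        \<le> lambda_Cmax (tadd3 A E)
    \<and> lambda_Cmax (tadd3 A E)
        \<le> sqrt ((lambda_Cmax A)\<^sup>2 + lambda_Zmax (tsub4 (S_tensor (tadd3 A E)) (S_tensor A)))"
proof -
  define D where "D = tsub4 (S_tensor (tadd3 A E)) (S_tensor A)"
  define C where "C = lambda_Cmax A"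
  define C' where "C' = lambda_Cmax (tadd3 A E)"
  have symD: "sym4 D" unfolding D_def using sym_sub sym_S assms by blast
  have PD: "P4 D y = P4 (S_tensor (tadd3 A E)) y - P4 (S_tensor A) y" for y
    unfolding D_def by (rule P4_sub)
  obtain C0: "0 \<le> C" and Cle: "\<forall>y::real^'n. y \<bullet> y = 1 \<longrightarrow> P4 (S_tensor A) y \<le> C^2"
    and Cex: "\<exists>y::real^'n. y \<bullet> y = 1 \<and> P4 (S_tensor A) y = C^2"
    using Cmax_props[of A] unfolding C_def by blast
  obtain C'0: "0 \<le> C'" and C'le: "\<forall>y::real^'n. y \<bullet> y = 1 \<longrightarrow> P4 (S_tensor (tadd3 A E)) y \<le> C'^2"
    and C'ex: "\<exists>y::real^'n. y \<bullet> y = 1 \<and> P4 (S_tensor (tadd3 A E)) y = C'^2"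
    using Cmax_props[of "tadd3 A E"] unfolding C'_def by blast
  obtain y1 :: "real^'n" where y1: "y1 \<bullet> y1 = 1" "P4 (S_tensor (tadd3 A E)) y1 = C'^2" using C'ex by blast
  obtain y0 :: "real^'n" where y0: "y0 \<bullet> y0 = 1" "P4 (S_tensor A) y0 = C^2" using Cex by blast
  obtain ym :: "real^'n" where ym: "ym \<bullet> ym = 1" "\<forall>y. y \<bullet> y = 1 \<longrightarrow> P4 D ym \<le> P4 D y"
    using exists_min[OF continuous_P4] by blast
  have Zmax1: "P4 D y1 \<le> lambda_Zmax D" by (rule Zmax_ge[OF symD y1(1)])
  have up: "C'^2 \<le> C^2 + lambda_Zmax D"
  proof -
    have "P4 (S_tensor A) y1 \<le> C^2" using Cle y1(1) by blast
    then show ?thesis using Zmax1 PD[of y1] y1(2) by linarith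
  qed
  have Zmin0: "lambda_Zmin D \<le> P4 D y0" by (rule Zmin_le[OF symD y0(1)])
  have lo: "C^2 + lambda_Zmin D \<le> C'^2"
  proof -
    have "P4 (S_tensor (tadd3 A E)) y0 \<le> C'^2" using C'le y0(1) by blast
    then show ?thesis using Zmin0 PD[of y0] y0(2) by linarith
  qed
  have nn: "0 \<le> C^2 + lambda_Zmin D"
  proof -
    obtain ym :: "real^'n" where ym: "ym \<bullet> ym = 1" "lambda_Zmin D = P4 D ym" using Zmin_val[OF symD] by blast
    then have "lambda_Zmin D \<ge> P4 D ym" by simp
    moreover have "P4 (S_tensor (tadd3 A E)) ym \<ge> 0" unfolding P4_S_norm by simp
    moreover have "P4 (S_tensor A) ym \<le> C^2" using Cle ym(1) by blast
    ultimately show ?thesis using PD[of ym] by linarith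
  qed
  have nn2: "0 \<le> C^2 + lambda_Zmax D" proof -
    have "0 \<le> C'^2" by simp
    then show ?thesis using up by linarith
  qed
  have s1: "sqrt (C^2 + lambda_Zmin D) \<le> C'"
  proof -
    have "sqrt (C^2 + lambda_Zmin D) \<le> sqrt (C'^2)" using lo by (rule real_sqrt_le_mono)
    then show ?thesis using C'0 by simp
  qed
  have s2: "C' \<le> sqrt (C^2 + lambda_Zmax D)"
  proof -
    have "sqrt (C'^2) \<le> sqrt (C^2 + lambda_Zmax D)" using up by (rule real_sqrt_le_mono)
    then show ?thesis using C'0 by simp
  qed
  show ?thesis using nn nn2 s1 s2 unfolding C_def C'_def D_def by blast
qed
end
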